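(* Let $X$ be a Minkowski space and let $A=\{\mathbf{x}_1,\dots,\mathbf{x}_{2k}\}\subset X$ be a $d$-collinear set of even size, listed in its natural order. Then \[\mathrm{FT}(A)=\bigcap_{i=1}^k[\mathbf{x}_i\mathbf{x}_{2k-i+1}]_d=[\mathbf{x}_k\mathbf{x}_{k+1}]_d.\]
   Context: A Minkowski space is a finite-dimensional real normed space $(X,\|\cdot\|)$. A metric line is a subset of $X$ isometric to $\mathbb{R}$; a set is $d$-collinear if it is contained in a metric line. A finite $d$-collinear set $\{\mathbf{x}_1,\dots,\mathbf{x}_m\}$ is listed in its natural order if there is an isometry $f$ from it onto a subset of $\mathbb{R}$ with $f(\mathbf{x}_1)<f(\mathbf{x}_2)<\dots<f(\mathbf{x}_m)$. The $d$-segment is $[\mathbf{x}\mathbf{y}]_d=\{\mathbf{z}: \|\mathbf{x}-\mathbf{z}\|+\|\mathbf{z}-\mathbf{y}\|=\|\mathbf{x}-\mathbf{y}\|\}$. $\mathrm{FT}(A)$ is the set of minimizers of $\mathbf{x}\mapsto\sum_{\mathbf{a}\in A}\|\mathbf{x}-\mathbf{a}\|$. *)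

theory Defs
  imports "HOL-Analysis.Analysis"
begin

definition minkowski_space :: "'a::real_normed_vector itself \<Rightarrow> bool" where
  "minkowski_space _ \<longleftrightarrow> (\<exists>B::'a set. finite B \<and> span B = UNIV)"

definition metric_line :: "'a::real_normed_vector set \<Rightarrow> bool" where
  "metric_line L \<longleftrightarrow> (\<exists>f::real \<Rightarrow> 'a. range f = L \<and>
       (\<forall>s t. norm (f s - f t) = \<bar>s - t\<bar>))"

definition d_collinear :: "'a::real_normed_vector set \<Rightarrow> bool" where
  "d_collinear S \<longleftrightarrow> (\<exists>L. metric_line L \<and> S \<subseteq> L)"

definition natural_order :: "(nat \<Rightarrow> 'a::real_normed_vector) \<Rightarrow> nat \<Rightarrow> bool" where
  "natural_order x m \<longleftrightarrow> (\<exists>g::'a \<Rightarrow> real.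
       (\<forall>i\<in>{1..m}. \<forall>j\<in>{1..m}. \<bar>g (x i) - g (x j)\<bar> = norm (x i - x j)) \<and>
       (\<forall>i\<in>{1..m}. \<forall>j\<in>{1..m}. i < j \<longrightarrow> g (x i) < g (x j)))"

definition d_segment :: "'a::real_normed_vector \<Rightarrow> 'a \<Rightarrow> 'a set" where
  "d_segment x y = {z. norm (x - z) + norm (z - y) = norm (x - y)}"

definition FT :: "'a::real_normed_vector set \<Rightarrow> 'a set" where
  "FT A = {x. \<forall>y. (\<Sum>a\<in>A. norm (x - a)) \<le> (\<Sum>a\<in>A. norm (y - a))}"

end

theory Submission
  imports Defs
begin

lemma seg_mono:
  fixes a b c d z :: "'a::real_normed_vector"
  assumes "norm (a - b) = norm (a - c) + norm (c - d) + norm (d - b)"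
    and "z \<in> d_segment c d"
  shows "z \<in> d_segment a b"
proof -
  have 1: "norm (a - z) \<le> norm (a - c) + norm (c - z)" by (rule norm_diff_triangle_le) auto
  have 2: "norm (z - b) \<le> norm (z - d) + norm (d - b)" by (rule norm_diff_triangle_le) auto
  have 3: "norm (a - b) \<le> norm (a - z) + norm (z - b)" by (rule norm_diff_triangle_le) auto
  from assms(2) have "norm (c - z) + norm (z - d) = norm (c - d)" by (simp add: d_segment_def)
  with 1 2 3 assms(1) show ?thesis by (simp add: d_segment_def)
qed

lemma sum_split2:
  fixes h :: "nat \<Rightarrow> real"
  shows "(\<Sum>i\<in>{1..2*k}. h i) = (\<Sum>i\<in>{1..k}. h i + h (2*k - i + 1))"
proof -
  have "{1..2*k} = {1..k} \<union> {k+1..2*k}" by auto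
  hence "(\<Sum>i\<in>{1..2*k}. h i) = (\<Sum>i\<in>{1..k}. h i) + (\<Sum>i\<in>{k+1..2*k}. h i)"
    by (simp add: sum.union_disjoint)
  moreover have "(\<Sum>i\<in>{k+1..2*k}. h i) = (\<Sum>i\<in>{1..k}. h (2*k - i + 1))"
    by (rule sum.reindex_bij_witness[of _ "\<lambda>i. 2*k - i + 1" "\<lambda>i. 2*k - i + 1"]) auto
  ultimately show ?thesis by (simp add: sum.distrib)
qed

theorem corollary3p19:
  fixes x :: "nat \<Rightarrow> 'a::real_normed_vector" and k :: nat
  assumes "minkowski_space TYPE('a)"
    and "k \<ge> 1"
    and "d_collinear (x ` {1..2*k})"
    and "natural_order x (2*k)"
  shows "FT (x ` {1..2*k}) = (\<Inter>i\<in>{1..k}. d_segment (x i) (x (2*k - i + 1)))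
    \<and> (\<Inter>i\<in>{1..k}. d_segment (x i) (x (2*k - i + 1))) = d_segment (x k) (x (k+1))"
proof -
  obtain g :: "'a \<Rightarrow> real" where
    gd: "\<And>i j. i\<in>{1..2*k} \<Longrightarrow> j\<in>{1..2*k} \<Longrightarrow> \<bar>g (x i) - g (x j)\<bar> = norm (x i - x j)"
    and gm: "\<And>i j. i\<in>{1..2*k} \<Longrightarrow> j\<in>{1..2*k} \<Longrightarrow> i < j \<Longrightarrow> g (x i) < g (x j)"
    using assms(4) unfolding natural_order_def by blast
  have gle: "g (x i) \<le> g (x j)" if "i\<in>{1..2*k}" "j\<in>{1..2*k}" "i \<le> j" for i j
    using gm[OF that(1,2)] that(3) by (cases "i = j") auto
  define S where "S = (\<Inter>i\<in>{1..k}. d_segment (x i) (x (2*k - i + 1)))"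
  have key: "z \<in> d_segment (x i) (x (2*k - i + 1))"
    if "i \<in> {1..k}" "z \<in> d_segment (x k) (x (k+1))" for i z
  proof (rule seg_mono[OF _ that(2)])
    let ?j = "2*k - i + 1"
    have r: "i \<in> {1..2*k}" "k \<in> {1..2*k}" "k+1 \<in> {1..2*k}" "?j \<in> {1..2*k}"
      using that(1) assms(2) by auto
    have "g (x i) \<le> g (x k)" using gle[OF r(1) r(2)] that(1) by auto
    moreover have "g (x k) \<le> g (x (k+1))" using gle[OF r(2) r(3)] by auto
    moreover have "g (x (k+1)) \<le> g (x ?j)" using gle[OF r(3) r(4)] that(1) by auto
    ultimately show "norm (x i - x ?j) = norm (x i - x k) + norm (x k - x (k+1)) + norm (x (k+1) - x ?j)"
      using gd[OF r(1) r(4)] gd[OF r(1) r(2)] gd[OF r(2) r(3)] gd[OF r(3) r(4)] by linarith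
  qed
  have S2: "S = d_segment (x k) (x (k+1))"
  proof
    show "S \<subseteq> d_segment (x k) (x (k+1))"
      unfolding S_def using assms(2) by (auto dest!: bspec[of _ _ k])
    show "d_segment (x k) (x (k+1)) \<subseteq> S" unfolding S_def using key by blast
  qed
  have xkS: "x k \<in> S" unfolding S2 d_segment_def by simp
  have inj: "inj_on x {1..2*k}"
  proof (rule inj_onI)
    fix i j assume "i \<in> {1..2*k}" "j \<in> {1..2*k}" "x i = x j"
    thus "i = j" using gm[of i j] gm[of j i] by (metis less_irrefl nat_neq_iff)
  qed
  define N where "N z i = norm (z - x i) + norm (z - x (2*k - i + 1))" for z i
  define D where "D i = norm (x i - x (2*k - i + 1))" for i
  have F: "(\<Sum>a\<in>x ` {1..2*k}. norm (z - a)) = (\<Sum>i\<in>{1..k}. N z i)" for z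
  proof -
    have "(\<Sum>a\<in>x ` {1..2*k}. norm (z - a)) = (\<Sum>i\<in>{1..2*k}. norm (z - x i))"
      by (rule sum.reindex[OF inj, unfolded comp_def])
    also have "\<dots> = (\<Sum>i\<in>{1..k}. N z i)"
      unfolding N_def by (rule sum_split2)
    finally show ?thesis .
  qed
  have ND: "D i \<le> N z i" for z i
    unfolding N_def D_def by (metis norm_diff_triangle_le norm_minus_commute order_refl)
  have NDeq: "N z i = D i \<longleftrightarrow> z \<in> d_segment (x i) (x (2*k - i + 1))" for z i
    unfolding N_def D_def d_segment_def by (simp add: norm_minus_commute)
  have inS: "z \<in> S \<longleftrightarrow> (\<forall>i\<in>{1..k}. N z i = D i)" for z
    unfolding S_def NDeq by blast
  have FS: "(\<Sum>i\<in>{1..k}. N z i) = (\<Sum>i\<in>{1..k}. D i)" if "z \<in> S" for z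
    using that inS by (auto intro: sum.cong)
  have "FT (x ` {1..2*k}) = S"
  proof
    show "FT (x ` {1..2*k}) \<subseteq> S"
    proof
      fix z assume "z \<in> FT (x ` {1..2*k})"
      hence "(\<Sum>i\<in>{1..k}. N z i) \<le> (\<Sum>i\<in>{1..k}. D i)"
        unfolding FT_def F using FS[OF xkS] by (metis (mono_tags, lifting) mem_Collect_eq)
      hence "(\<Sum>i\<in>{1..k}. N z i - D i) = 0"
        using sum_mono[of "{1..k}" D "N z", OF ND] by (simp add: sum_subtractf)
      hence "\<forall>i\<in>{1..k}. N z i - D i = 0"
        by (subst (asm) sum_nonneg_eq_0_iff) (auto simp: ND)
      thus "z \<in> S" using inS by auto
    qed
    show "S \<subseteq> FT (x ` {1..2*k})"
    proof
      fix z assume "z \<in> S"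
      show "z \<in> FT (x ` {1..2*k})"
      proof -
        have "\<forall>y. (\<Sum>i\<in>{1..k}. N z i) \<le> (\<Sum>i\<in>{1..k}. N y i)"
        proof
          fix y show "(\<Sum>i\<in>{1..k}. N z i) \<le> (\<Sum>i\<in>{1..k}. N y i)"
            unfolding FS[OF \<open>z \<in> S\<close>] by (rule sum_mono) (rule ND)
        qed
        thus ?thesis unfolding FT_def F by simp
      qed
    qed
  qed
  with S2 show ?thesis unfolding S_def by simp
qed

end
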